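(* Let $\mathcal{L}\subseteq\mathbb{S}^n$ be a regular linear subspace. Every point of $\mathcal{L}^{-1}\cap\mathcal{L}^\perp$ is a non-invertible matrix.
   Context: $\mathbb{S}^n$ denotes the space of complex symmetric $n\times n$ matrices. A linear subspace $\mathcal{L}$ is regular if it contains a full-rank matrix. $\mathcal{L}^\perp=\{\Sigma:\mathrm{tr}(K\Sigma)=0\ \forall K\in\mathcal{L}\}$. The reciprocal variety $\mathcal{L}^{-1}$ is the Zariski closure of the set of inverses of invertible matrices in $\mathcal{L}$. *)

theory Defs
  imports "HOL-Analysis.Analysis"
begin

type_synonym 'n cmat = "complex^'n^'n"

definition sym_mats :: "'n::finite cmat set" where
  "sym_mats = {A. transpose A = A}"

definition cscale :: "complex \<Rightarrow> 'n::finite cmat \<Rightarrow> 'n cmat" where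
  "cscale c A = (\<chi> i j. c * A$i$j)"

definition sym_subspace :: "'n::finite cmat set \<Rightarrow> bool" where
  "sym_subspace L \<longleftrightarrow> L \<subseteq> sym_mats \<and> 0 \<in> L \<and>
     (\<forall>A\<in>L. \<forall>B\<in>L. A + B \<in> L) \<and> (\<forall>c. \<forall>A\<in>L. cscale c A \<in> L)"

definition regular_subspace :: "'n::finite cmat set \<Rightarrow> bool" where
  "regular_subspace L \<longleftrightarrow> (\<exists>K\<in>L. invertible K)"

definition perp_space :: "'n::finite cmat set \<Rightarrow> 'n cmat set" where
  "perp_space L = {S \<in> sym_mats. \<forall>K\<in>L. trace (K ** S) = 0}"

inductive_set poly_fun :: "('n::finite cmat \<Rightarrow> complex) set" where
  const: "(\<lambda>A. c) \<in> poly_fun"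
| entry: "(\<lambda>A. A$i$j) \<in> poly_fun"
| add: "p \<in> poly_fun \<Longrightarrow> q \<in> poly_fun \<Longrightarrow> (\<lambda>A. p A + q A) \<in> poly_fun"
| mult: "p \<in> poly_fun \<Longrightarrow> q \<in> poly_fun \<Longrightarrow> (\<lambda>A. p A * q A) \<in> poly_fun"

definition zariski_closure :: "'n::finite cmat set \<Rightarrow> 'n cmat set" where
  "zariski_closure S = {X. \<forall>p\<in>poly_fun. (\<forall>Y\<in>S. p Y = 0) \<longrightarrow> p X = 0}"

definition reciprocal_variety :: "'n::finite cmat set \<Rightarrow> 'n cmat set" where
  "reciprocal_variety L = zariski_closure (matrix_inv ` {K \<in> L. invertible K})"

end

theory Submission
  imports Defs
begin

lemma poly_fun_sum:
  assumes "finite I" "\<And>i. i \<in> I \<Longrightarrow> f i \<in> poly_fun"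
  shows "(\<lambda>A. \<Sum>i\<in>I. f i A) \<in> poly_fun"
  using assms
proof (induction I rule: finite_induct)
  case empty
  then show ?case using poly_fun.const[of 0] by simp
next
  case (insert x F)
  have "(\<lambda>A. f x A + (\<Sum>i\<in>F. f i A)) \<in> poly_fun"
    using insert by (intro poly_fun.add) auto
  then show ?case using insert by simp
qed

lemma poly_fun_prod:
  assumes "finite I" "\<And>i. i \<in> I \<Longrightarrow> f i \<in> poly_fun"
  shows "(\<lambda>A. \<Prod>i\<in>I. f i A) \<in> poly_fun"
  using assms
proof (induction I rule: finite_induct)
  case empty
  then show ?case using poly_fun.const[of 1] by simp
next
  case (insert x F)
  have "(\<lambda>A. f x A * (\<Prod>i\<in>F. f i A)) \<in> poly_fun"
    using insert by (intro poly_fun.mult) auto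
  then show ?case using insert by simp
qed

lemma poly_fun_det:
  fixes M :: "'n::finite cmat \<Rightarrow> 'm::finite cmat"
  assumes "\<And>a b. (\<lambda>X. M X $ a $ b) \<in> poly_fun"
  shows "(\<lambda>X. det (M X)) \<in> poly_fun"
proof -
  have "(\<lambda>X. \<Sum>p\<in>{p. p permutes (UNIV::'m set)}. of_int (sign p) * (\<Prod>i\<in>UNIV. M X $ i $ p i)) \<in> poly_fun"
    by (intro poly_fun_sum poly_fun.mult poly_fun.const poly_fun_prod assms)
       (auto simp: finite_permutations)
  then show ?thesis unfolding det_def .
qed

definition adjm :: "'n::finite cmat \<Rightarrow> 'n cmat" where
  "adjm X = (\<chi> k i. det (\<chi> a b. if b = k then (if a = i then 1 else 0) else X $ a $ b))"

lemma poly_fun_adjm: "(\<lambda>X. adjm X $ k $ i) \<in> poly_fun"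
  unfolding adjm_def
  apply simp
  apply (rule poly_fun_det)
  subgoal for a b
    by (cases "b = k") (auto intro: poly_fun.const poly_fun.entry)
  done

lemma inv_props:
  fixes A :: "'n::finite cmat"
  assumes "invertible A"
  shows "A ** matrix_inv A = mat 1" "matrix_inv A ** A = mat 1"
  using someI_ex[OF assms[unfolded invertible_def]] unfolding matrix_inv_def by auto

lemma inv_inv:
  fixes A :: "'n::finite cmat"
  assumes "invertible A"
  shows "invertible (matrix_inv A)" "matrix_inv (matrix_inv A) = A"
proof -
  show i: "invertible (matrix_inv A)"
    using inv_props[OF assms] unfolding invertible_def by blast
  have "matrix_inv (matrix_inv A) = (A ** matrix_inv A) ** matrix_inv (matrix_inv A)"
    using inv_props[OF assms] by simp
  also have "\<dots> = A ** (matrix_inv A ** matrix_inv (matrix_inv A))"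
    by (simp add: matrix_mul_assoc)
  also have "\<dots> = A" using inv_props[OF i] by simp
  finally show "matrix_inv (matrix_inv A) = A" .
qed

lemma adjm_inv:
  fixes X :: "'n::finite cmat"
  assumes "invertible X"
  shows "adjm X = (\<chi> k i. det X * matrix_inv X $ k $ i)"
proof -
  have d: "det X \<noteq> 0" using assms invertible_det_nz by blast
  show ?thesis
  proof (rule vec_eq_iff[THEN iffD2], rule allI, rule vec_eq_iff[THEN iffD2], rule allI)
    fix k i
    let ?x = "matrix_inv X *v axis i 1"
    have ax: "X *v ?x = axis i 1"
      using inv_props[OF assms] by (simp add: matrix_vector_mul_assoc)
    have "det ((\<chi> a b. if b = k then (X *v ?x) $ a else X $ a $ b)) = ?x $ k * det X"
      by (rule cramer_lemma)
    moreover have "?x $ k = matrix_inv X $ k $ i"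
      by (simp add: matrix_vector_mult_def axis_def if_distrib cong: if_cong)
    moreover have "(\<chi> a b. if b = k then axis i (1::complex) $ a else X $ a $ b)
       = (\<chi> a b. if b = k then (if a = i then 1 else 0) else X $ a $ b)"
      by (rule vec_eq_iff[THEN iffD2], auto simp: axis_def vec_eq_iff)
    ultimately show "adjm X $ k $ i = (\<chi> k i. det X * matrix_inv X $ k $ i) $ k $ i"
      unfolding adjm_def ax by (simp add: mult.commute)
  qed
qed

theorem lemma2p6:
  fixes L :: "'n::finite cmat set"
  assumes "sym_subspace L" and "regular_subspace L"
      and "S \<in> reciprocal_variety L \<inter> perp_space L"
  shows "\<not> invertible S"
proof
  assume invS: "invertible S"
  define p where "p = (\<lambda>X::'n cmat. \<Sum>k\<in>UNIV. \<Sum>i\<in>UNIV. adjm X $ k $ i * S $ i $ k)"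
  have pp: "p \<in> poly_fun"
    unfolding p_def
    by (intro poly_fun_sum poly_fun.mult poly_fun_adjm poly_fun.const) auto
  have ptr: "p X = det X * trace (matrix_inv X ** S)" if "invertible X" for X
    unfolding p_def adjm_inv[OF that] trace_def matrix_matrix_mult_def
    by (simp add: sum_distrib_left mult.assoc)
  have perp: "\<forall>K\<in>L. trace (K ** S) = 0" using assms(3) unfolding perp_space_def by auto
  have "\<forall>Y\<in>matrix_inv ` {K \<in> L. invertible K}. p Y = 0"
  proof
    fix Y assume "Y \<in> matrix_inv ` {K \<in> L. invertible K}"
    then obtain K where K: "K \<in> L" "invertible K" "Y = matrix_inv K" by auto
    show "p Y = 0" using ptr[OF inv_inv(1)[OF K(2)]] inv_inv(2)[OF K(2)] perp K by simp
  qed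
  hence "p S = 0" using assms(3) pp unfolding reciprocal_variety_def zariski_closure_def by auto
  moreover have "p S = det S * of_nat CARD('n)"
    using ptr[OF invS] inv_props(2)[OF invS] by (simp add: trace_I)
  moreover have "det S \<noteq> 0" using invS invertible_det_nz by blast
  ultimately show False by simp
qed

end
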